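(* Let $A_1,B_3,A_2,B_1,A_3,B_2$ be six points lying on a (nondegenerate) conic, taken as the vertices, in this order, of the inscribed hexagon $A_1B_3A_2B_1A_3B_2$, in general position so that the points below are well defined. For every permutation $(i,j,k)$ of $(1,2,3)$ let $Q_{ij}$ be the intersection point of the lines $A_iB_k$ and $B_jA_k$. Then the three lines $Q_{12}Q_{21}$, $Q_{13}Q_{31}$ and $Q_{23}Q_{32}$ pass through a common point.
   Context: Points and lines are in the real projective plane. *)

theory Defs
  imports "HOL-Analysis.Analysis"
begin

text \<open>Real projective plane in homogeneous coordinates: a point (or a line) is represented
by a nonzero vector of real^3, up to nonzero scaling. Point p lies on line l iff p \<bullet> l = 0.\<close>

definition proj_point :: "real^3 \<Rightarrow> bool" where
  "proj_point p \<longleftrightarrow> p \<noteq> 0"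

definition same_point :: "real^3 \<Rightarrow> real^3 \<Rightarrow> bool" where
  "same_point p q \<longleftrightarrow> cross3 p q = 0"

definition incident :: "real^3 \<Rightarrow> real^3 \<Rightarrow> bool" where
  "incident p l \<longleftrightarrow> p \<bullet> l = 0"

definition join :: "real^3 \<Rightarrow> real^3 \<Rightarrow> real^3" where
  "join p q = cross3 p q"

definition meet :: "real^3 \<Rightarrow> real^3 \<Rightarrow> real^3" where
  "meet l m = cross3 l m"

definition nondeg_conic :: "real^3^3 \<Rightarrow> bool" where
  "nondeg_conic M \<longleftrightarrow> transpose M = M \<and> det M \<noteq> 0"

definition on_conic :: "real^3^3 \<Rightarrow> real^3 \<Rightarrow> bool" where
  "on_conic M p \<longleftrightarrow> p \<bullet> (M *v p) = 0"

definition concurrent :: "real^3 \<Rightarrow> real^3 \<Rightarrow> real^3 \<Rightarrow> bool" where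
  "concurrent l m n \<longleftrightarrow> (\<exists>p. proj_point p \<and> incident p l \<and> incident p m \<and> incident p n)"

definition Qpt :: "(nat \<Rightarrow> real^3) \<Rightarrow> (nat \<Rightarrow> real^3) \<Rightarrow> nat \<Rightarrow> nat \<Rightarrow> nat \<Rightarrow> real^3" where
  "Qpt A B i j k = meet (join (A i) (B k)) (join (B j) (A k))"

end

theory Submission
  imports Defs
begin
definition linB :: "(real^3) * (real^3) * (real^3) \<Rightarrow> real^3 \<Rightarrow> real^3" where
  "linB Y a = a$1 *\<^sub>R fst Y + a$2 *\<^sub>R fst (snd Y) + a$3 *\<^sub>R snd (snd Y)"
definition cb :: "(real^3) * (real^3) * (real^3) \<Rightarrow> (real^3) * (real^3) * (real^3)" where
  "cb Y = (cross3 (fst (snd Y)) (snd (snd Y)), cross3 (snd (snd Y)) (fst Y), cross3 (fst Y) (fst (snd Y)))"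
definition tri :: "(real^3) * (real^3) * (real^3) \<Rightarrow> real" where
  "tri Y = fst Y \<bullet> cross3 (fst (snd Y)) (snd (snd Y))"

lemma cross_lin: "cross3 (linB Y a) (linB Y b) = linB (cb Y) (cross3 a b)"
  unfolding linB_def cb_def
  by (simp add: cross3_simps forall_3)

lemma lin_scale: "linB Y (c *\<^sub>R a) = c *\<^sub>R linB Y a"
  unfolding linB_def by (simp add: scaleR_add_right)

lemma triple_lin: "linB Y a \<bullet> cross3 (linB Y b) (linB Y c) = tri Y * (a \<bullet> cross3 b c)"
  unfolding linB_def tri_def
  by (simp add: cross3_simps forall_3)

definition qp :: "real \<Rightarrow> real^3" where "qp t = vector [(t*t), t, 1]"
definition e1 :: "real^3" where "e1 = vector [1, 0, 0]"
definition lnv :: "real \<Rightarrow> real \<Rightarrow> real^3" where "lnv s t = vector [1, -(s+t), s*t]"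
definition l0 :: "real \<Rightarrow> real^3" where "l0 t = vector [0, -1, t]"

lemma cross_vector: "cross3 (vector [a,b,c]) (vector [x,y,z]) = vector [b*z - c*y, c*x - a*z, a*y - b*x]"
  by (simp add: cross3_simps forall_3)
lemma inner_vector: "(vector [a,b,c] :: real^3) \<bullet> vector [x,y,z] = a*x + b*y + c*z"
  by (simp add: cross3_simps)

lemma cross_qp: "cross3 (qp s) (qp t) = (s - t) *\<^sub>R lnv s t"
  by (simp add: qp_def lnv_def cross_vector cross3_simps forall_3 power2_eq_square)
lemma cross_e1: "cross3 e1 (qp t) = l0 t"
  by (simp add: qp_def e1_def l0_def cross_vector)
lemma cross_e1': "cross3 (qp t) e1 = (-1) *\<^sub>R l0 t"
  by (simp add: qp_def e1_def l0_def cross_vector cross3_simps forall_3)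

lemma join_scale: "cross3 (a *\<^sub>R x) (b *\<^sub>R y) = (a*b) *\<^sub>R cross3 x y"
  by (simp add: cross_mult_left cross_mult_right)
lemma triple_scale: "(a *\<^sub>R x) \<bullet> cross3 (b *\<^sub>R y) (c *\<^sub>R z) = a*b*c * (x \<bullet> cross3 y z)"
  by (simp add: cross_mult_left cross_mult_right)

lemma reduced:
  "cross3 (cross3 (l0 b3) (lnv b2 a3)) (cross3 (lnv a2 b3) (lnv b1 a3)) \<bullet>
   cross3 (cross3 (cross3 (l0 b2) (lnv b3 a2)) (cross3 (lnv a3 b2) (lnv b1 a2)))
          (cross3 (cross3 (lnv a2 b1) (l0 b3)) (cross3 (lnv a3 b1) (l0 b2))) = 0"
  unfolding l0_def lnv_def cross_vector inner_vector by algebra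

lemma qlevel:
  fixes qa qb :: "nat \<Rightarrow> real^3"
  assumes "qa 1 = e1" "qa 2 = qp a2" "qa 3 = qp a3" "qb 1 = qp b1" "qb 2 = qp b2" "qb 3 = qp b3"
  shows "join (Qpt qa qb 1 2 3) (Qpt qa qb 2 1 3) \<bullet>
         cross3 (join (Qpt qa qb 1 3 2) (Qpt qa qb 3 1 2)) (join (Qpt qa qb 2 3 1) (Qpt qa qb 3 2 1)) = 0"
proof -
  have 1: "Qpt qa qb 1 2 3 = (b2-a3) *\<^sub>R cross3 (l0 b3) (lnv b2 a3)"
    unfolding Qpt_def meet_def join_def assms by (simp add: cross_qp cross_e1 cross_e1' cross_mult_left cross_mult_right)
  have 2: "Qpt qa qb 2 1 3 = ((a2-b3)*(b1-a3)) *\<^sub>R cross3 (lnv a2 b3) (lnv b1 a3)"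
    unfolding Qpt_def meet_def join_def assms by (simp add: cross_qp cross_e1 cross_e1' cross_mult_left cross_mult_right)
  have 3: "Qpt qa qb 1 3 2 = (b3-a2) *\<^sub>R cross3 (l0 b2) (lnv b3 a2)"
    unfolding Qpt_def meet_def join_def assms by (simp add: cross_qp cross_e1 cross_e1' cross_mult_left cross_mult_right)
  have 4: "Qpt qa qb 3 1 2 = ((a3-b2)*(b1-a2)) *\<^sub>R cross3 (lnv a3 b2) (lnv b1 a2)"
    unfolding Qpt_def meet_def join_def assms by (simp add: cross_qp cross_e1 cross_e1' cross_mult_left cross_mult_right)
  have 5: "Qpt qa qb 2 3 1 = ((a2-b1)*(-1)) *\<^sub>R cross3 (lnv a2 b1) (l0 b3)"
    unfolding Qpt_def meet_def join_def assms by (simp add: cross_qp cross_e1 cross_e1' cross_mult_left cross_mult_right) (simp add: algebra_simps)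
  have 6: "Qpt qa qb 3 2 1 = ((a3-b1)*(-1)) *\<^sub>R cross3 (lnv a3 b1) (l0 b2)"
    unfolding Qpt_def meet_def join_def assms by (simp add: cross_qp cross_e1 cross_e1' cross_mult_left cross_mult_right) (simp add: algebra_simps)
  show ?thesis
    unfolding 1 2 3 4 5 6 join_def join_scale triple_scale by (simp add: reduced)
qed

lemma sym_inner:
  fixes M :: "real^3^3"
  assumes "transpose M = M"
  shows "x \<bullet> (M *v y) = y \<bullet> (M *v x)"
proof -
  have s: "M$i$j = M$j$i" for i j
    using arg_cong[OF assms, of "\<lambda>A. A$j$i"] by (simp add: transpose_def)
  show ?thesis
    by (simp add: inner_vec_def matrix_vector_mult_def sum_3 algebra_simps s[of 1 2] s[of 1 3] s[of 2 3])
qed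

lemma MX:
  fixes M :: "real^3^3"
  assumes "transpose M = M"
  shows "M *v cross3 (M *v x) (M *v y) = det M *\<^sub>R cross3 x y"
  using cross_matrix_mult[of M x y] assms by simp

lemma lagrange: "cross3 a b \<bullet> cross3 c d = (a \<bullet> c) * (b \<bullet> d) - (a \<bullet> d) * (b \<bullet> c)"
  by (simp add: cross3_simps)

lemma cross_cross: "cross3 (cross3 a b) c = (a \<bullet> c) *\<^sub>R b - (b \<bullet> c) *\<^sub>R a"
  by (simp add: cross3_simps forall_3)

lemma decomp: "(P \<bullet> cross3 X R) *\<^sub>R p = (p \<bullet> cross3 X R) *\<^sub>R P + (P \<bullet> cross3 p R) *\<^sub>R X + (P \<bullet> cross3 X p) *\<^sub>R R"
  by (simp add: cross3_simps forall_3)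

lemma par:
  assumes "n \<noteq> 0" "cross3 n y = 0" "cross3 n z = 0"
  shows "cross3 y z = 0"
proof -
  have i: "cross3 (cross3 n v) n = (n \<bullet> n) *\<^sub>R v - (v \<bullet> n) *\<^sub>R n" for v
    by (simp add: cross3_simps forall_3)
  have nn: "n \<bullet> n \<noteq> 0" using assms(1) by simp
  have g: "v = ((v \<bullet> n) / (n \<bullet> n)) *\<^sub>R n" if "cross3 n v = 0" for v
  proof -
    have h: "(n \<bullet> n) *\<^sub>R v = (v \<bullet> n) *\<^sub>R n" using i[of v] that by simp
    have "(1/(n \<bullet> n)) *\<^sub>R ((n \<bullet> n) *\<^sub>R v) = (1/(n \<bullet> n)) *\<^sub>R ((v \<bullet> n) *\<^sub>R n)" using h by simp
    thus ?thesis using nn by simp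
  qed
  have y: "y = ((y \<bullet> n) / (n \<bullet> n)) *\<^sub>R n" using g assms(2) by blast
  have z: "z = ((z \<bullet> n) / (n \<bullet> n)) *\<^sub>R n" using g assms(3) by blast
  show ?thesis by (subst y, subst z) (simp add: cross_mult_left cross_mult_right)
qed

lemma mat_rows: "(vector [l,m,n] :: real^3^3) *v x = vector [l \<bullet> x, m \<bullet> x, n \<bullet> x]"
  by (simp add: matrix_vector_mult_def vec_eq_iff forall_3 inner_vec_def sum_3)

lemma conc:
  assumes "l \<bullet> cross3 m n = 0"
  shows "concurrent l m n"
proof -
  let ?A = "vector [l,m,n] :: real^3^3"
  have "det ?A = 0" using assms dot_cross_det by metis
  then have "\<not> (\<exists>B. B ** ?A = mat 1)" using invertible_det_nz invertible_left_inverse by blast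
  then obtain x where x: "?A *v x = 0" "x \<noteq> 0" using matrix_left_invertible_ker by blast
  then have "l \<bullet> x = 0" "m \<bullet> x = 0" "n \<bullet> x = 0"
    unfolding mat_rows by (auto simp: vec_eq_iff forall_3)
  then show ?thesis using x(2) unfolding concurrent_def proj_point_def incident_def
    by (metis inner_commute)
qed


lemma conic_setup:
  fixes M :: "real^3^3"
  assumes sym: "transpose M = M" and dM: "det M \<noteq> 0"
    and PP: "P \<bullet> (M *v P) = 0" and RR: "R \<bullet> (M *v R) = 0" and nPR: "cross3 P R \<noteq> 0"
  shows "\<exists>Y k. k \<noteq> 0 \<and> P = (1/k) *\<^sub>R linB Y e1 \<and>
     (\<forall>p. p \<bullet> (M *v p) = 0 \<longrightarrow> cross3 p P \<noteq> 0 \<longrightarrow> (\<exists>\<alpha> t. p = \<alpha> *\<^sub>R linB Y (qp t)))"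
proof -
  define c where "c = P \<bullet> (M *v R)"
  define y where "y = M *v P"
  define z where "z = M *v R"
  define n where "n = cross3 P R"
  define X where "X = cross3 y z"
  have cR: "R \<bullet> y = c" unfolding c_def y_def using sym_inner[OF sym] by metis
  have Py: "P \<bullet> y = 0" using PP y_def by simp
  have Rz: "R \<bullet> z = 0" using RR z_def by simp
  have Pz: "P \<bullet> z = c" using c_def z_def by simp
  have MXe: "M *v X = det M *\<^sub>R n" unfolding X_def y_def z_def n_def using MX[OF sym] .
  have c0: "c \<noteq> 0"
  proof
    assume c: "c = 0"
    have "cross3 n y = 0" unfolding n_def cross_cross using Py cR c by (simp add: inner_commute)
    moreover have "cross3 n z = 0" unfolding n_def cross_cross using Pz Rz c by (simp add: inner_commute)
    ultimately have "X = 0" unfolding X_def using par nPR n_def by blast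
    then have "det M *\<^sub>R n = 0" using MXe by simp
    then show False using dM nPR n_def by simp
  qed
  define d where "d = X \<bullet> (M *v X)"
  have d_eq: "d = - det M * (c*c)"
  proof -
    have "d = det M * (X \<bullet> n)" unfolding d_def MXe by simp
    also have "X \<bullet> n = (y \<bullet> P) * (z \<bullet> R) - (y \<bullet> R) * (z \<bullet> P)" unfolding X_def n_def lagrange ..
    also have "\<dots> = - (c*c)" using Py Rz Pz cR by (simp add: inner_commute power2_eq_square)
    finally show ?thesis by simp
  qed
  have d0: "d \<noteq> 0" using d_eq dM c0 by simp
  define k where "k = - d / (2*c)"
  have k0: "k \<noteq> 0" using d0 c0 k_def by simp
  define Y where "Y = (k *\<^sub>R P, X, R)"
  have P_e1: "P = (1/k) *\<^sub>R linB Y e1" using k0 by (simp add: Y_def linB_def e1_def)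
  have XR: "cross3 X R = c *\<^sub>R z" unfolding X_def cross_cross using Rz cR by (simp add: inner_commute)
  have D: "P \<bullet> cross3 X R = c * c" unfolding XR using Pz by simp
  have rep: "\<exists>\<alpha> t. p = \<alpha> *\<^sub>R linB Y (qp t)" if pc: "p \<bullet> (M *v p) = 0" and pn: "cross3 p P \<noteq> 0" for p
  proof -
    define w1 where "w1 = (p \<bullet> cross3 X R) / (c*c)"
    define w2 where "w2 = (P \<bullet> cross3 p R) / (c*c)"
    define w3 where "w3 = (P \<bullet> cross3 X p) / (c*c)"
    have pe: "p = w1 *\<^sub>R P + w2 *\<^sub>R X + w3 *\<^sub>R R"
    proof -
      have "(c*c) *\<^sub>R p = (c*c) *\<^sub>R (w1 *\<^sub>R P + w2 *\<^sub>R X + w3 *\<^sub>R R)"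
        using decomp[of P X R p] c0 unfolding D w1_def w2_def w3_def by (simp add: scaleR_add_right)
      then show ?thesis using c0 by simp
    qed
    have Mp: "M *v p = w1 *\<^sub>R y + w2 *\<^sub>R (M *v X) + w3 *\<^sub>R z"
      by (subst pe) (simp add: algebra_simps y_def z_def)
    have vals1: "P \<bullet> (M *v X) = 0" "R \<bullet> (M *v X) = 0"
      unfolding MXe n_def by (simp_all add: dot_cross_self)
    have vals2: "X \<bullet> y = 0" "X \<bullet> z = 0"
      unfolding X_def by (simp_all add: dot_cross_self)
    note vals = vals1 vals2
    have Xd: "X \<bullet> (M *v X) = d" using d_def by simp
    have "p \<bullet> (M *v p) = 2*c*w1*w3 + d*(w2*w2)"
      unfolding Mp by (subst pe) (simp add: inner_add_left inner_add_right vals Xd Py Rz Pz cR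
          inner_commute[of R y] algebra_simps power2_eq_square)
    then have cw: "2*c*w1*w3 + d*(w2*w2) = 0" using pc by simp
    have w3: "w3 \<noteq> 0"
    proof
      assume w: "w3 = 0"
      then have "w2 = 0" using cw d0 by simp
      then have "p = w1 *\<^sub>R P" using pe w by simp
      then show False using pn by (simp add: cross_mult_left)
    qed
    define t where "t = w2 / w3"
    have w1e: "w1 = w3 * (t*t) * k"
      using cw w3 c0 unfolding t_def k_def by (simp add: field_simps power2_eq_square)
    have "p = w3 *\<^sub>R linB Y (qp t)"
      unfolding pe by (simp add: Y_def linB_def qp_def w1e t_def w3 algebra_simps)
    then show ?thesis by blast
  qed
  show ?thesis using k0 P_e1 rep by blast
qed


lemma Qpt_transfer:
  assumes "A i = a1 *\<^sub>R linB Y (qa i)" "A k = a2 *\<^sub>R linB Y (qa k)"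
    "B k = b1 *\<^sub>R linB Y (qb k)" "B j = b2 *\<^sub>R linB Y (qb j)"
  shows "Qpt A B i j k = ((a1*b1)*(b2*a2)) *\<^sub>R linB (cb (cb Y)) (Qpt qa qb i j k)"
  unfolding Qpt_def meet_def join_def assms
  by (simp only: join_scale cross_lin)

lemma join_transfer: "join (c *\<^sub>R linB Z x) (d *\<^sub>R linB Z y) = (c*d) *\<^sub>R linB (cb Z) (join x y)"
  unfolding join_def by (simp only: join_scale cross_lin)

lemma triple_transfer:
  "(c1 *\<^sub>R linB Z x) \<bullet> cross3 (c2 *\<^sub>R linB Z y) (c3 *\<^sub>R linB Z z) = c1*c2*c3 * tri Z * (x \<bullet> cross3 y z)"
  by (simp only: triple_scale triple_lin mult.assoc)

theorem theorem2:
  fixes A B :: "nat \<Rightarrow> real^3" and M :: "real^3^3"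
  assumes conic: "nondeg_conic M"
    and pts: "\<And>i. i \<in> {1,2,3} \<Longrightarrow> proj_point (A i) \<and> proj_point (B i)"
    and on: "\<And>i. i \<in> {1,2,3} \<Longrightarrow> on_conic M (A i) \<and> on_conic M (B i)"
    and distA: "\<And>i j. i \<in> {1,2,3} \<Longrightarrow> j \<in> {1,2,3} \<Longrightarrow> i \<noteq> j \<Longrightarrow> \<not> same_point (A i) (A j)"
    and distB: "\<And>i j. i \<in> {1,2,3} \<Longrightarrow> j \<in> {1,2,3} \<Longrightarrow> i \<noteq> j \<Longrightarrow> \<not> same_point (B i) (B j)"
    and distAB: "\<And>i j. i \<in> {1,2,3} \<Longrightarrow> j \<in> {1,2,3} \<Longrightarrow> \<not> same_point (A i) (B j)"
    and gen12: "\<not> same_point (Qpt A B 1 2 3) (Qpt A B 2 1 3)"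
    and gen13: "\<not> same_point (Qpt A B 1 3 2) (Qpt A B 3 1 2)"
    and gen23: "\<not> same_point (Qpt A B 2 3 1) (Qpt A B 3 2 1)"
  shows "concurrent (join (Qpt A B 1 2 3) (Qpt A B 2 1 3))
                    (join (Qpt A B 1 3 2) (Qpt A B 3 1 2))
                    (join (Qpt A B 2 3 1) (Qpt A B 3 2 1))"
proof -
  have sym: "transpose M = M" and dM: "det M \<noteq> 0" using conic unfolding nondeg_conic_def by auto
  have onA: "A i \<bullet> (M *v A i) = 0" and onB: "B i \<bullet> (M *v B i) = 0" if "i \<in> {1,2,3}" for i
    using on[OF that] unfolding on_conic_def by auto
  have nPR: "cross3 (A 1) (B 3) \<noteq> 0" using distAB[of 1 3] unfolding same_point_def by simp
  obtain Y k where k0: "k \<noteq> 0" and P: "A 1 = (1/k) *\<^sub>R linB Y e1"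
    and rep: "\<And>p. p \<bullet> (M *v p) = 0 \<Longrightarrow> cross3 p (A 1) \<noteq> 0 \<Longrightarrow> \<exists>\<alpha> t. p = \<alpha> *\<^sub>R linB Y (qp t)"
    using conic_setup[OF sym dM onA[of 1] onB[of 3] nPR] by auto
  have nA: "cross3 (A i) (A 1) \<noteq> 0" if "i \<in> {2,3}" for i
    using distA[of i 1] that unfolding same_point_def by auto
  have nB: "cross3 (B i) (A 1) \<noteq> 0" if "i \<in> {1,2,3}" for i
  proof
    assume "cross3 (B i) (A 1) = 0"
    then have "cross3 (A 1) (B i) = 0" using cross_skew[of "B i" "A 1"] by simp
    then show False using distAB[of 1 i] that unfolding same_point_def by simp
  qed
  obtain \<alpha>2 a2 where A2: "A 2 = \<alpha>2 *\<^sub>R linB Y (qp a2)" using rep[OF onA nA] by fastforce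
  obtain \<alpha>3 a3 where A3: "A 3 = \<alpha>3 *\<^sub>R linB Y (qp a3)" using rep[OF onA nA] by fastforce
  obtain \<beta>1 b1 where B1: "B 1 = \<beta>1 *\<^sub>R linB Y (qp b1)" using rep[OF onB nB] by fastforce
  obtain \<beta>2 b2 where B2: "B 2 = \<beta>2 *\<^sub>R linB Y (qp b2)" using rep[OF onB nB] by fastforce
  obtain \<beta>3 b3 where B3: "B 3 = \<beta>3 *\<^sub>R linB Y (qp b3)" using rep[OF onB nB] by fastforce
  define qa :: "nat \<Rightarrow> real^3" where "qa = (\<lambda>i. if i = 1 then e1 else if i = 2 then qp a2 else qp a3)"
  define qb :: "nat \<Rightarrow> real^3" where "qb = (\<lambda>i. if i = 1 then qp b1 else if i = 2 then qp b2 else qp b3)"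
  define \<alpha> :: "nat \<Rightarrow> real" where "\<alpha> = (\<lambda>i. if i = 1 then 1/k else if i = 2 then \<alpha>2 else \<alpha>3)"
  define \<beta> :: "nat \<Rightarrow> real" where "\<beta> = (\<lambda>i. if i = 1 then \<beta>1 else if i = 2 then \<beta>2 else \<beta>3)"
  have hA: "A i = \<alpha> i *\<^sub>R linB Y (qa i)" if "i \<in> {1,2,3}" for i
    using that P A2 A3 unfolding qa_def \<alpha>_def by auto
  have hB: "B i = \<beta> i *\<^sub>R linB Y (qb i)" if "i \<in> {1,2,3}" for i
    using that B1 B2 B3 unfolding qb_def \<beta>_def by auto
  have Q: "Qpt A B i j k = ((\<alpha> i * \<beta> k) * (\<beta> j * \<alpha> k)) *\<^sub>R linB (cb (cb Y)) (Qpt qa qb i j k)"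
    if "i \<in> {1,2,3}" "j \<in> {1,2,3}" "k \<in> {1,2,3}" for i j k
    by (rule Qpt_transfer) (use hA hB that in auto)
  have ql: "join (Qpt qa qb 1 2 3) (Qpt qa qb 2 1 3) \<bullet>
         cross3 (join (Qpt qa qb 1 3 2) (Qpt qa qb 3 1 2)) (join (Qpt qa qb 2 3 1) (Qpt qa qb 3 2 1)) = 0"
    by (rule qlevel) (simp_all add: qa_def qb_def)
  have "join (Qpt A B 1 2 3) (Qpt A B 2 1 3) \<bullet>
         cross3 (join (Qpt A B 1 3 2) (Qpt A B 3 1 2)) (join (Qpt A B 2 3 1) (Qpt A B 3 2 1)) = 0"
    by (simp only: Q[of 1 2 3] Q[of 2 1 3] Q[of 1 3 2] Q[of 3 1 2] Q[of 2 3 1] Q[of 3 2 1]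
        insert_iff simp_thms join_transfer triple_transfer ql mult_zero_right)
  then show ?thesis by (rule conc)
qed

end
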